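(* Let $L,L'$ be links and suppose $W:\mathrm{HY}(L)\to\mathrm{HY}(L')$ is a grading-preserving linear map that commutes with the action of $\mathcal{F}_k$ for all $k\ge1$. Then $W$ commutes with the action of the involution $\Phi$ and of the dual operators $\mathcal{E}_k=\Phi\mathcal{F}_k\Phi$.
   Context: $\mathrm{HY}(L)$ is the (triply graded, with gradings written $\mathrm{HY}^i_{a,b}$) $y$-ified Khovanov–Rozansky homology of Gorsky–Hogancamp. $\mathcal F_k$ ($k\ge1$) are the tautological operators of Gorsky–Hogancamp–Mellit, and $\mathcal F_1$ satisfies the curious hard Lefschetz property: $\mathcal F_1^j:\mathrm{HY}^i_{-2j,k}\to\mathrm{HY}^i_{2j,k+2j}$ is an isomorphism for all $i,k$ and $j\ge0$. A nonzero $v\in\mathrm{HY}^i_{-2j,k}$ with $j\ge0$ and $\mathcal F_1^{j+1}v=0$ is a highest weight vector; $\mathrm{HY}$ has a basis of vectors $\mathcal F_1^sv$ with $v$ highest weight and $s\le j$. The operator $\mathcal E_1$ is defined by $\mathcal E_1(\mathcal F_1^sv)=0$ if $s=0$ and $s(j-s+1)\mathcal F_1^{s-1}v$ if $s>0$; the involution $\Phi$ by $\Phi(\mathcal F_1^sv)=\frac{1}{(j-s)\cdots(s+1)}\mathcal F_1^{j-s}v$ if $j-2s>0$, $\mathcal F_1^sv$ if $j=2s$, $s\cdots(j-s+1)\mathcal F_1^{j-s}v$ if $j-2s<0$. $\mathcal E_k=\Phi\mathcal F_k\Phi$. *)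

theory Defs
  imports Complex_Main
begin

(* Abstract model of y-ified homology HY(L) with its tautological operators.
   A degree is a triple (i, a, b), written HY^i_{a,b}.
   The space is a vector space over a field of characteristic 0 (scale),
   H d is the graded piece of degree d, F k is the operator F_k (k >= 1). *)

type_synonym deg = "int \<times> int \<times> int"

definition highest_weight ::
  "(deg \<Rightarrow> 'v set) \<Rightarrow> (nat \<Rightarrow> 'v \<Rightarrow> 'v::zero) \<Rightarrow> 'v \<Rightarrow> int \<Rightarrow> nat \<Rightarrow> int \<Rightarrow> bool" where
  "highest_weight H F v i j k \<longleftrightarrow>
     v \<in> H (i, - 2 * int j, k) \<and> v \<noteq> 0 \<and> (F 1 ^^ (j + 1)) v = 0"

(* Structure of HY(L): graded vector space (direct sum of its graded pieces),
   linear operators F_k, curious hard Lefschetz for F_1, and the basis fact: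
   HY is spanned by the vectors F_1^s v, v highest weight in HY^i_{-2j,k}, s <= j. *)
definition HY_structure ::
  "('a::field_char_0 \<Rightarrow> 'v::ab_group_add \<Rightarrow> 'v) \<Rightarrow> (deg \<Rightarrow> 'v set) \<Rightarrow> (nat \<Rightarrow> 'v \<Rightarrow> 'v) \<Rightarrow> bool" where
  "HY_structure scale H F \<longleftrightarrow>
     vector_space scale
   \<and> (\<forall>d. module.subspace scale (H d))
   \<and> (\<forall>x. \<exists>!c. finite {d. c d \<noteq> 0} \<and> (\<forall>d. c d \<in> H d) \<and> x = sum c {d. c d \<noteq> 0})
   \<and> (\<forall>k\<ge>1. Vector_Spaces.linear scale scale (F k))
   \<and> (\<forall>i k j. bij_betw (F 1 ^^ j) (H (i, - 2 * int j, k)) (H (i, 2 * int j, k + 2 * int j)))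
   \<and> module.span scale
       {(F 1 ^^ s) v | v s i j k. highest_weight H F v i j k \<and> s \<le> j} = UNIV"

definition is_Phi ::
  "('a::field_char_0 \<Rightarrow> 'v::ab_group_add \<Rightarrow> 'v) \<Rightarrow> (deg \<Rightarrow> 'v set) \<Rightarrow> (nat \<Rightarrow> 'v \<Rightarrow> 'v) \<Rightarrow> ('v \<Rightarrow> 'v) \<Rightarrow> bool" where
  "is_Phi scale H F Phi \<longleftrightarrow>
     Vector_Spaces.linear scale scale Phi
   \<and> (\<forall>v i j k s. highest_weight H F v i j k \<and> s \<le> j \<longrightarrow>
        Phi ((F 1 ^^ s) v) =
          (if 2 * s < j then scale (1 / (\<Prod>t\<in>{s+1..j-s}. of_nat t)) ((F 1 ^^ (j - s)) v)
           else if 2 * s = j then (F 1 ^^ s) v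
           else scale (\<Prod>t\<in>{j-s+1..s}. of_nat t) ((F 1 ^^ (j - s)) v)))"

definition E_op :: "('v \<Rightarrow> 'v) \<Rightarrow> (nat \<Rightarrow> 'v \<Rightarrow> 'v) \<Rightarrow> nat \<Rightarrow> 'v \<Rightarrow> 'v" where
  "E_op Phi F k = Phi \<circ> F k \<circ> Phi"

end

theory Submission
  imports Defs
begin

lemma pow_comm:
  assumes "W \<circ> f = g \<circ> W"
  shows "W ((f ^^ n) x) = (g ^^ n) (W x)"
proof (induction n)
  case 0 then show ?case by simp
next
  case (Suc n)
  have "W (f ((f ^^ n) x)) = g (W ((f ^^ n) x))" using assms by (metis comp_apply)
  then show ?case using Suc by simp
qed

lemma pow_zero:
  assumes "Vector_Spaces.linear s s f"
  shows "(f ^^ n) 0 = 0"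
proof (induction n)
  case 0 then show ?case by simp
next
  case (Suc n)
  then show ?case using assms
    by (simp add: module_hom.zero linear_iff_module_hom)
qed

definition coefPhi :: "nat \<Rightarrow> nat \<Rightarrow> 'a::field_char_0" where
  "coefPhi s j = (if 2 * s < j then 1 / (\<Prod>t\<in>{s+1..j-s}. of_nat t)
           else if 2 * s = j then 1
           else (\<Prod>t\<in>{j-s+1..s}. of_nat t))"

lemma Phi_gen:
  assumes "HY_structure scale H F" "is_Phi scale H F Phi"
    "highest_weight H F v i j k" "s \<le> j"
  shows "Phi ((F 1 ^^ s) v) = scale (coefPhi s j) ((F 1 ^^ (j - s)) v)"
proof -
  have vs: "vector_space scale" using assms(1) unfolding HY_structure_def by blast
  have e: "Phi ((F 1 ^^ s) v) =
          (if 2 * s < j then scale (1 / (\<Prod>t\<in>{s+1..j-s}. of_nat t)) ((F 1 ^^ (j - s)) v)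
           else if 2 * s = j then (F 1 ^^ s) v
           else scale (\<Prod>t\<in>{j-s+1..s}. of_nat t) ((F 1 ^^ (j - s)) v))"
    using assms(2-4) unfolding is_Phi_def by blast
  show ?thesis
  proof (cases "2 * s = j")
    case True
    then have "j - s = s" by simp
    then show ?thesis using e True vs by (simp add: coefPhi_def vector_space.vector_space_assms(4))
  next
    case False
    then show ?thesis using e by (simp add: coefPhi_def)
  qed
qed

theorem corollary2p9:
  fixes scale :: "'a::field_char_0 \<Rightarrow> 'v::ab_group_add \<Rightarrow> 'v"
    and scale' :: "'a \<Rightarrow> 'w::ab_group_add \<Rightarrow> 'w"
    and H :: "deg \<Rightarrow> 'v set" and H' :: "deg \<Rightarrow> 'w set"
    and F :: "nat \<Rightarrow> 'v \<Rightarrow> 'v" and F' :: "nat \<Rightarrow> 'w \<Rightarrow> 'w"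
    and Phi :: "'v \<Rightarrow> 'v" and Phi' :: "'w \<Rightarrow> 'w"
    and W :: "'v \<Rightarrow> 'w"
  assumes "HY_structure scale H F" and "HY_structure scale' H' F'"
    and "is_Phi scale H F Phi" and "is_Phi scale' H' F' Phi'"
    and "Vector_Spaces.linear scale scale' W"
    and "\<forall>d. W ` H d \<subseteq> H' d"
    and "\<forall>k\<ge>1. W \<circ> F k = F' k \<circ> W"
  shows "W \<circ> Phi = Phi' \<circ> W \<and> (\<forall>k\<ge>1. W \<circ> E_op Phi F k = E_op Phi' F' k \<circ> W)"
proof -
  have vs1: "vector_space scale" using assms(1) unfolding HY_structure_def by blast
  have vs2: "vector_space scale'" using assms(2) unfolding HY_structure_def by blast
  interpret vp: vector_space_pair scale scale' using vs1 vs2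
    by (simp add: vector_space_pair_def)
  have linPhi: "Vector_Spaces.linear scale scale Phi" using assms(3) unfolding is_Phi_def by blast
  have linPhi': "Vector_Spaces.linear scale' scale' Phi'" using assms(4) unfolding is_Phi_def by blast
  have linF1': "Vector_Spaces.linear scale' scale' (F' 1)" using assms(2) unfolding HY_structure_def by simp
  have WF: "W \<circ> F 1 = F' 1 \<circ> W" using assms(7) by simp
  have spanU: "vp.vs1.span
       {(F 1 ^^ s) v | v s i j k. highest_weight H F v i j k \<and> s \<le> j} = UNIV"
    using assms(1) unfolding HY_structure_def by blast
  have l1: "Vector_Spaces.linear scale scale' (W \<circ> Phi)"
    using linPhi assms(5) by (rule Vector_Spaces.linear_compose)
  have l2: "Vector_Spaces.linear scale scale' (Phi' \<circ> W)"
    using assms(5) linPhi' by (rule Vector_Spaces.linear_compose)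
  have gen: "(W \<circ> Phi) b = (Phi' \<circ> W) b"
    if bB: "b \<in> {(F 1 ^^ s) v | v s i j k. highest_weight H F v i j k \<and> s \<le> j}" for b
  proof -
    obtain v s i j k where b: "b = (F 1 ^^ s) v" and hw: "highest_weight H F v i j k" and sj: "s \<le> j"
      using bB by blast
    have lhs: "W (Phi b) = scale' (coefPhi s j) ((F' 1 ^^ (j - s)) (W v))"
      using Phi_gen[OF assms(1) assms(3) hw sj] b pow_comm[OF WF]
      by (simp add: module_hom.scale[OF assms(5)[unfolded linear_iff_module_hom]])
    have Wb: "W b = (F' 1 ^^ s) (W v)" using b pow_comm[OF WF] by simp
    show ?thesis
    proof (cases "W v = 0")
      case True
      have "Phi' 0 = 0" using linPhi' by (simp add: module_hom.zero linear_iff_module_hom)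
      then show ?thesis using lhs Wb True pow_zero[OF linF1']
        by (simp add: vp.vs2.scale_zero_right)
    next
      case False
      have "W v \<in> H' (i, - 2 * int j, k)" using hw assms(6) unfolding highest_weight_def by blast
      moreover have "(F' 1 ^^ (j + 1)) (W v) = 0"
        using hw pow_comm[OF WF, of "j+1" v] assms(5) unfolding highest_weight_def
        by (simp add: module_hom.zero linear_iff_module_hom)
      ultimately have hw': "highest_weight H' F' (W v) i j k"
        using False unfolding highest_weight_def by blast
      show ?thesis using Phi_gen[OF assms(2) assms(4) hw' sj] lhs Wb by simp
    qed
  qed
  have P: "W \<circ> Phi = Phi' \<circ> W"
  proof
    fix x
    have "x \<in> vp.vs1.span
       {(F 1 ^^ s) v | v s i j k. highest_weight H F v i j k \<and> s \<le> j}" using spanU by simp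
    from vp.linear_eq_on[OF l1 l2 this gen] show "(W \<circ> Phi) x = (Phi' \<circ> W) x" .
  qed
  have "W \<circ> E_op Phi F k = E_op Phi' F' k \<circ> W" if "k \<ge> 1" for k
  proof -
    have Fk: "W \<circ> F k = F' k \<circ> W" using assms(7) that by simp
    have "W \<circ> E_op Phi F k = ((W \<circ> Phi) \<circ> F k) \<circ> Phi" by (simp add: E_op_def comp_assoc)
    also have "\<dots> = Phi' \<circ> (W \<circ> F k) \<circ> Phi" using P by (simp add: comp_assoc)
    also have "\<dots> = Phi' \<circ> F' k \<circ> (W \<circ> Phi)" using Fk by (simp add: comp_assoc)
    also have "\<dots> = E_op Phi' F' k \<circ> W" using P by (simp add: E_op_def comp_assoc)
    finally show ?thesis .
  qed
  then show ?thesis using P by blast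
qed

end
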